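(* Let $(G,\mathcal{T},(A^\circ,B^\circ),k)$ be a Terminal Separation instance, let $\mathcal{T}'\subseteq\mathcal{T}$ be the set of terminal pairs disjoint from $A^\circ\cup B^\circ$, and let $\{s,t\}\in\mathcal{T}'$. Let $(A_s,B_t)$ be a terminal separation of minimum cost among those extending $(A^\circ\cup\{s\},B^\circ\cup\{t\})$, and $(A_t,B_s)$ a terminal separation of minimum cost among those extending $(A^\circ\cup\{t\},B^\circ\cup\{s\})$. Suppose that neither $(A_s,B_t)$ nor $(A_t,B_s)$ contains in $A\cup B$ any terminal pair of $\mathcal{T}'$ other than $\{s,t\}$. Then for every set $A$ with $A^\circ\cup\{s\}\subseteq A\subseteq V(G)\setminus B^\circ$ whose only terminal from pairs of $\mathcal{T}'$ is $s$, we have $d(A)-d(A^\circ)\ge d(A_s)-d(A^\circ)$; and symmetrically, for every set $B$ with $B^\circ\cup\{s\}\subseteq B\subseteq V(G)\setminus A^\circ$ whose only terminal from pairs of $\mathcal{T}'$ is $s$, we have $d(B)-d(B^\circ)\ge d(B_s)-d(B^\circ)$.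
   Context: Graphs may have multiple edges but no loops; $d(X)$ is the number of edges with exactly one endpoint in $X$. For a family $\mathcal{T}$ of pairwise disjoint vertex pairs (terminals are their vertices), a terminal separation is a pair $(A,B)$ of disjoint vertex sets such that each pair in $\mathcal{T}$ either has one vertex in $A$ and one in $B$ or is disjoint from $A\cup B$; $(A',B')$ extends $(A,B)$ if $A\subseteq A'$, $B\subseteq B'$; cost $c(A,B)=(d(A)+d(B))/2$. A Terminal Separation instance $(G,\mathcal{T},(A^\circ,B^\circ),k)$ has every terminal of degree at most one and $(A^\circ,B^\circ)$ a terminal separation. *)

theory Defs
  imports Complex_Main "HOL-Library.Multiset"
begin

definition multigraph :: "'a set \<Rightarrow> 'a set multiset \<Rightarrow> bool" where
  "multigraph V E \<longleftrightarrow> finite V \<and> (\<forall>e \<in># E. e \<subseteq> V \<and> card e = 2)"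

definition dcut :: "'a set multiset \<Rightarrow> 'a set \<Rightarrow> nat" where
  "dcut E X = size (filter_mset (\<lambda>e. card (e \<inter> X) = 1) E)"

definition degree :: "'a set multiset \<Rightarrow> 'a \<Rightarrow> nat" where
  "degree E v = size (filter_mset (\<lambda>e. v \<in> e) E)"

definition terminal_pairs :: "'a set \<Rightarrow> 'a set set \<Rightarrow> bool" where
  "terminal_pairs V T \<longleftrightarrow> (\<forall>p \<in> T. p \<subseteq> V \<and> card p = 2) \<and>
     (\<forall>p \<in> T. \<forall>q \<in> T. p \<noteq> q \<longrightarrow> p \<inter> q = {})"

definition terminals :: "'a set set \<Rightarrow> 'a set" where
  "terminals T = \<Union>T"

definition terminal_sep :: "'a set \<Rightarrow> 'a set set \<Rightarrow> 'a set \<Rightarrow> 'a set \<Rightarrow> bool" where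
  "terminal_sep V T A B \<longleftrightarrow> A \<subseteq> V \<and> B \<subseteq> V \<and> A \<inter> B = {} \<and>
     (\<forall>p \<in> T. (card (p \<inter> A) = 1 \<and> card (p \<inter> B) = 1) \<or> p \<inter> (A \<union> B) = {})"

definition extends :: "'a set \<Rightarrow> 'a set \<Rightarrow> 'a set \<Rightarrow> 'a set \<Rightarrow> bool" where
  "extends A' B' A B \<longleftrightarrow> A \<subseteq> A' \<and> B \<subseteq> B'"

definition cost :: "'a set multiset \<Rightarrow> 'a set \<Rightarrow> 'a set \<Rightarrow> real" where
  "cost E A B = (real (dcut E A) + real (dcut E B)) / 2"

definition min_ext_sep ::
  "'a set \<Rightarrow> 'a set multiset \<Rightarrow> 'a set set \<Rightarrow> 'a set \<Rightarrow> 'a set \<Rightarrow> 'a set \<Rightarrow> 'a set \<Rightarrow> bool" where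
  "min_ext_sep V E T A0 B0 A B \<longleftrightarrow> terminal_sep V T A B \<and> extends A B A0 B0 \<and>
     (\<forall>A' B'. terminal_sep V T A' B' \<and> extends A' B' A0 B0 \<longrightarrow> cost E A B \<le> cost E A' B')"

definition TS_instance ::
  "'a set \<Rightarrow> 'a set multiset \<Rightarrow> 'a set set \<Rightarrow> 'a set \<Rightarrow> 'a set \<Rightarrow> nat \<Rightarrow> bool" where
  "TS_instance V E T A0 B0 k \<longleftrightarrow> multigraph V E \<and> terminal_pairs V T \<and>
     (\<forall>v \<in> terminals T. degree E v \<le> 1) \<and> terminal_sep V T A0 B0"

end

theory Submission
  imports Defs
begin

lemma two_elem: "card p = 2 \<Longrightarrow> a \<in> p \<Longrightarrow> b \<in> p \<Longrightarrow> a \<noteq> b \<Longrightarrow> p = {a,b}"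
  by (auto simp: card_2_iff)

lemma card1_pair: "a \<noteq> b \<Longrightarrow> card ({a,b} \<inter> S) = 1 \<longleftrightarrow> (a \<in> S) \<noteq> (b \<in> S)"
proof -
  assume ab: "a \<noteq> b"
  consider "a \<in> S" "b \<in> S" | "a \<in> S" "b \<notin> S" | "a \<notin> S" "b \<in> S" | "a \<notin> S" "b \<notin> S" by blast
  then show ?thesis
  proof cases
    case 1 then have "{a,b} \<inter> S = {a,b}" by auto
    then show ?thesis using ab 1 by simp
  next
    case 2 then have "{a,b} \<inter> S = {a}" using ab by auto
    then show ?thesis using 2 by simp
  next
    case 3 then have "{a,b} \<inter> S = {b}" using ab by auto
    then show ?thesis using 3 by simp
  next
    case 4 then have "{a,b} \<inter> S = {}" by auto
    then show ?thesis using 4 by simp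
  qed
qed

lemma edge_posi:
  assumes "card e = 2"
  shows "(if card (e \<inter> (X - Y)) = 1 then 1 else 0) + (if card (e \<inter> (Y - X)) = 1 then 1 else 0)
     \<le> (if card (e \<inter> X) = 1 then 1 else 0) + (if card (e \<inter> Y) = 1 then (1::nat) else 0)"
proof -
  obtain u v where e: "e = {u,v}" "u \<noteq> v" using assms by (auto simp: card_2_iff)
  have "\<And>S. card (e \<inter> S) = 1 \<longleftrightarrow> (u \<in> S) \<noteq> (v \<in> S)" using e card1_pair by metis
  then show ?thesis by (simp only:) auto
qed

lemma dcut_add: "dcut (add_mset e E) X = dcut E X + (if card (e \<inter> X) = 1 then 1 else 0)"
  by (simp add: dcut_def)

lemma posimod:
  assumes "\<forall>e \<in># E. card e = 2"
  shows "dcut E (X - Y) + dcut E (Y - X) \<le> dcut E X + dcut E Y"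
  using assms
proof (induction E)
  case empty
  then show ?case by (simp add: dcut_def)
next
  case (add e E)
  then have "card e = 2" by simp
  from edge_posi[OF this, of X Y] add show ?case
    by (simp add: dcut_add)
qed

lemma core:
  fixes V :: "'a set" and E :: "'a set multiset" and T :: "'a set set" and A0 B0 :: "'a set"
  defines "T' \<equiv> {p \<in> T. p \<inter> (A0 \<union> B0) = {}}"
  assumes tp: "terminal_pairs V T"
    and sep0: "terminal_sep V T A0 B0"
    and edges: "\<forall>e \<in># E. card e = 2"
    and st: "{s, t} \<in> T'"
    and min_s: "min_ext_sep V E T (A0 \<union> {s}) (B0 \<union> {t}) As Bt"
    and only_s: "\<forall>p \<in> T'. p \<noteq> {s, t} \<longrightarrow> \<not> p \<subseteq> As \<union> Bt"
    and A: "A0 \<union> {s} \<subseteq> A" "A \<subseteq> V - B0" "A \<inter> terminals T' = {s}"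
  shows "dcut E As \<le> dcut E A"
proof -
  have sepS: "terminal_sep V T As Bt" and extS: "A0 \<union> {s} \<subseteq> As" "B0 \<union> {t} \<subseteq> Bt"
    and minS: "\<And>A' B'. terminal_sep V T A' B' \<Longrightarrow> A0 \<union> {s} \<subseteq> A' \<Longrightarrow> B0 \<union> {t} \<subseteq> B'
        \<Longrightarrow> cost E As Bt \<le> cost E A' B'"
    using min_s unfolding min_ext_sep_def extends_def by auto
  have stT: "{s,t} \<in> T" using st unfolding T'_def by auto
  have card2: "\<And>p. p \<in> T \<Longrightarrow> card p = 2" and pV: "\<And>p. p \<in> T \<Longrightarrow> p \<subseteq> V"
    and disj: "\<And>p q. p \<in> T \<Longrightarrow> q \<in> T \<Longrightarrow> p \<noteq> q \<Longrightarrow> p \<inter> q = {}"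
    using tp unfolding terminal_pairs_def by auto
  have sne: "s \<noteq> t" using card2[OF stT] by (cases "s = t") auto
  have tterm: "t \<in> terminals T'" using st unfolding terminals_def by auto
  have tA: "t \<notin> A" using A(3) tterm sne by auto
  have sepS': "As \<subseteq> V" "Bt \<subseteq> V" "As \<inter> Bt = {}"
    and sepSp: "\<And>p. p \<in> T \<Longrightarrow> (card (p \<inter> As) = 1 \<and> card (p \<inter> Bt) = 1) \<or> p \<inter> (As \<union> Bt) = {}"
    using sepS unfolding terminal_sep_def by auto
  have sep0': "A0 \<inter> B0 = {}"
    and sep0p: "\<And>p. p \<in> T \<Longrightarrow> (card (p \<inter> A0) = 1 \<and> card (p \<inter> B0) = 1) \<or> p \<inter> (A0 \<union> B0) = {}"
    using sep0 unfolding terminal_sep_def by auto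
  let ?A' = "A - Bt" and ?B' = "Bt - A"
  have sep': "terminal_sep V T ?A' ?B'"
    unfolding terminal_sep_def
  proof (intro conjI ballI)
    show "?A' \<subseteq> V" using A by auto
    show "?B' \<subseteq> V" using sepS' by auto
    show "?A' \<inter> ?B' = {}" by auto
  next
    fix p assume pT: "p \<in> T"
    show "(card (p \<inter> ?A') = 1 \<and> card (p \<inter> ?B') = 1) \<or> p \<inter> (?A' \<union> ?B') = {}"
    proof (cases "p \<inter> (A0 \<union> B0) = {}")
      case False
      then have "card (p \<inter> A0) = 1" "card (p \<inter> B0) = 1" using sep0p[OF pT] by auto
      then obtain a b where a: "p \<inter> A0 = {a}" and b: "p \<inter> B0 = {b}"
        by (auto simp: card_1_singleton_iff)
      have ab: "a \<noteq> b" using a b sep0' by auto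
      have p: "p = {a,b}" using two_elem[OF card2[OF pT], of a b] a b ab by auto
      have "a \<in> A" "a \<notin> Bt" "b \<in> Bt" "b \<notin> A" using a b A extS sepS'(3) by auto
      then show ?thesis unfolding p using ab by (simp add: card1_pair)
    next
      case True
      then have pT': "p \<in> T'" using pT unfolding T'_def by auto
      show ?thesis
      proof (cases "p = {s,t}")
        case True
        have "s \<in> A" "s \<notin> Bt" "t \<in> Bt" using A extS sepS'(3) by auto
        then show ?thesis unfolding True using sne tA by (simp add: card1_pair)
      next
        case False
        have pst: "p \<inter> {s,t} = {}" using disj[OF pT stT False] .
        have "p \<subseteq> terminals T'" using pT' unfolding terminals_def by auto
        then have pA: "p \<inter> A = {}" using A(3) pst by auto
        have "p \<inter> (As \<union> Bt) = {}"
        proof (rule ccontr)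
          assume "p \<inter> (As \<union> Bt) \<noteq> {}"
          then have "card (p \<inter> As) = 1" "card (p \<inter> Bt) = 1" using sepSp[OF pT] by auto
          then obtain a b where a: "p \<inter> As = {a}" and b: "p \<inter> Bt = {b}"
            by (auto simp: card_1_singleton_iff)
          have ab: "a \<noteq> b" using a b sepS'(3) by auto
          have p: "p = {a,b}" using two_elem[OF card2[OF pT], of a b] a b ab by auto
          have "p \<subseteq> As \<union> Bt" using p a b by auto
          then show False using only_s pT' False by auto
        qed
        then show ?thesis using pA by auto
      qed
    qed
  qed
  have "A0 \<union> {s} \<subseteq> ?A'" using A extS sepS'(3) by auto
  moreover have "B0 \<union> {t} \<subseteq> ?B'" using A extS tA by auto
  ultimately have "cost E As Bt \<le> cost E ?A' ?B'" using minS[OF sep'] by auto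
  then have "dcut E As + dcut E Bt \<le> dcut E ?A' + dcut E ?B'"
    unfolding cost_def by simp
  moreover have "dcut E ?A' + dcut E ?B' \<le> dcut E A + dcut E Bt"
    using posimod[OF edges] by blast
  ultimately show ?thesis by simp
qed

lemma sep_sym: "terminal_sep V T A B = terminal_sep V T B A"
  unfolding terminal_sep_def by (auto simp: Un_commute)

lemma min_sym1: "min_ext_sep V E T A0 B0 A B \<Longrightarrow> min_ext_sep V E T B0 A0 B A"
proof -
  assume h: "min_ext_sep V E T A0 B0 A B"
  show ?thesis unfolding min_ext_sep_def extends_def
  proof (intro conjI allI impI)
    show "terminal_sep V T B A" using h sep_sym unfolding min_ext_sep_def by metis
    show "B0 \<subseteq> B" "A0 \<subseteq> A" using h unfolding min_ext_sep_def extends_def by auto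
  next
    fix A' B' assume a: "terminal_sep V T A' B' \<and> B0 \<subseteq> A' \<and> A0 \<subseteq> B'"
    then have "terminal_sep V T B' A'" using sep_sym by metis
    then have "cost E A B \<le> cost E B' A'" using h a unfolding min_ext_sep_def extends_def by auto
    then show "cost E B A \<le> cost E A' B'" unfolding cost_def by (simp add: add.commute)
  qed
qed

theorem lemma5p2:
  fixes V :: "'a set" and E :: "'a set multiset" and T :: "'a set set"
    and A0 B0 As Bt At Bs :: "'a set" and k :: nat and s t :: 'a
  defines "T' \<equiv> {p \<in> T. p \<inter> (A0 \<union> B0) = {}}"
  assumes inst: "TS_instance V E T A0 B0 k"
    and st: "{s, t} \<in> T'"
    and min_s: "min_ext_sep V E T (A0 \<union> {s}) (B0 \<union> {t}) As Bt"
    and min_t: "min_ext_sep V E T (A0 \<union> {t}) (B0 \<union> {s}) At Bs"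
    and only_s: "\<forall>p \<in> T'. p \<noteq> {s, t} \<longrightarrow> \<not> p \<subseteq> As \<union> Bt"
    and only_t: "\<forall>p \<in> T'. p \<noteq> {s, t} \<longrightarrow> \<not> p \<subseteq> At \<union> Bs"
  shows "(\<forall>A. A0 \<union> {s} \<subseteq> A \<and> A \<subseteq> V - B0 \<and> A \<inter> terminals T' = {s} \<longrightarrow>
            int (dcut E A) - int (dcut E A0) \<ge> int (dcut E As) - int (dcut E A0))
       \<and> (\<forall>B. B0 \<union> {s} \<subseteq> B \<and> B \<subseteq> V - A0 \<and> B \<inter> terminals T' = {s} \<longrightarrow>
            int (dcut E B) - int (dcut E B0) \<ge> int (dcut E Bs) - int (dcut E B0))"
proof -
  have tp: "terminal_pairs V T" and sep0: "terminal_sep V T A0 B0"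
    and edges: "\<forall>e \<in># E. card e = 2"
    using inst unfolding TS_instance_def multigraph_def by auto
  have T'2: "T' = {p \<in> T. p \<inter> (B0 \<union> A0) = {}}" unfolding T'_def by (auto simp: Un_commute)
  have part1: "\<forall>A. A0 \<union> {s} \<subseteq> A \<and> A \<subseteq> V - B0 \<and> A \<inter> terminals T' = {s} \<longrightarrow>
            int (dcut E A) - int (dcut E A0) \<ge> int (dcut E As) - int (dcut E A0)"
  proof (intro allI impI)
    fix A assume h: "A0 \<union> {s} \<subseteq> A \<and> A \<subseteq> V - B0 \<and> A \<inter> terminals T' = {s}"
    have "dcut E As \<le> dcut E A"
      using core[OF tp sep0 edges _ min_s _ , of A] st only_s h unfolding T'_def by simp
    then show "int (dcut E A) - int (dcut E A0) \<ge> int (dcut E As) - int (dcut E A0)" by simp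
  qed
  have part2: "\<forall>B. B0 \<union> {s} \<subseteq> B \<and> B \<subseteq> V - A0 \<and> B \<inter> terminals T' = {s} \<longrightarrow>
            int (dcut E B) - int (dcut E B0) \<ge> int (dcut E Bs) - int (dcut E B0)"
  proof (intro allI impI)
    fix B assume h: "B0 \<union> {s} \<subseteq> B \<and> B \<subseteq> V - A0 \<and> B \<inter> terminals T' = {s}"
    have sep0s: "terminal_sep V T B0 A0" using sep0 sep_sym by metis
    have mt: "min_ext_sep V E T (B0 \<union> {s}) (A0 \<union> {t}) Bs At" using min_sym1[OF min_t] .
    have ot: "\<forall>p \<in> T'. p \<noteq> {s, t} \<longrightarrow> \<not> p \<subseteq> Bs \<union> At" using only_t by (auto simp: Un_commute)
    have "dcut E Bs \<le> dcut E B"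
      using core[OF tp sep0s edges _ mt _ , of B] st ot h unfolding T'2 by simp
    then show "int (dcut E B) - int (dcut E B0) \<ge> int (dcut E Bs) - int (dcut E B0)" by simp
  qed
  show ?thesis using part1 part2 by blast
qed

end
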